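(* Let $G$ be a $k$-uniform tight cycle (an $s$-cycle with $s=k-1$), with $m=n$ edges and vertices. Then $G$ is regular. Assume further that $k$ is even and write $k=2^{t_0}(2l_0+1)$ with nonnegative integers $t_0,l_0$. Then $G$ is odd-bipartite if and only if $m=n$ is a multiple of $2^{t_0}$.
   Context: A $k$-uniform $s$-cycle with $m$ edges has vertex set $\mathbb{Z}_n$, $n=m(k-s)$ (vertex $n+i$ identified with $i$), and edges $e_j=\{j(k-s)+1,\ldots,j(k-s)+k\}$, $j=0,\ldots,m-1$; it is assumed that $n\ge 2k-s$ (for $s=k-1$: $n=m\ge k+1$). A hypergraph is regular if all vertex degrees are equal. A $k$-uniform hypergraph with $k$ even and vertex set $V$ is odd-bipartite if either it has no edges or there is a partition $V=V_1\cup V_2$ with $V_1,V_2\ne\emptyset$ such that every edge intersects $V_1$ in an odd number of vertices. *)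

theory Defs
  imports Main
begin

text \<open>Vertex set Z_n is represented as {0..<n}, vertex i read modulo n.\<close>

definition s_cycle_vertices :: "nat \<Rightarrow> nat \<Rightarrow> nat \<Rightarrow> nat set" where
  "s_cycle_vertices k s m = {0..<m * (k - s)}"

definition s_cycle_edges :: "nat \<Rightarrow> nat \<Rightarrow> nat \<Rightarrow> nat set set" where
  "s_cycle_edges k s m =
     {{(j * (k - s) + i) mod (m * (k - s)) | i. 1 \<le> i \<and> i \<le> k} | j. j < m}"

definition hdegree :: "'a set set \<Rightarrow> 'a \<Rightarrow> nat" where
  "hdegree E v = card {e \<in> E. v \<in> e}"

definition hregular :: "'a set \<Rightarrow> 'a set set \<Rightarrow> bool" where
  "hregular V E \<longleftrightarrow> (\<forall>u\<in>V. \<forall>v\<in>V. hdegree E u = hdegree E v)"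

definition odd_bipartite :: "'a set \<Rightarrow> 'a set set \<Rightarrow> bool" where
  "odd_bipartite V E \<longleftrightarrow> E = {} \<or>
     (\<exists>V1 V2. V = V1 \<union> V2 \<and> V1 \<inter> V2 = {} \<and> V1 \<noteq> {} \<and> V2 \<noteq> {} \<and>
        (\<forall>e\<in>E. odd (card (e \<inter> V1))))"

end

theory Submission
  imports Defs
begin

lemma win_card:
  assumes "k < n"
  shows "card ({(j+i) mod n | i::nat. 1\<le>i \<and> i\<le>k} \<inter> V1) =
         (\<Sum>i<k. (if (j+1+i) mod n \<in> V1 then 1 else 0::nat))"
proof -
  have e: "{(j+i) mod n | i::nat. 1\<le>i \<and> i\<le>k} \<inter> V1 = (\<lambda>i. (j+1+i) mod n) ` {i\<in>{..<k}. (j+1+i) mod n \<in> V1}"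
  proof (intro equalityI subsetI)
    fix x assume "x \<in> {(j+i) mod n | i::nat. 1\<le>i \<and> i\<le>k} \<inter> V1"
    then obtain i where "x = (j+i) mod n" "1 \<le> i" "i \<le> k" "x \<in> V1" by blast
    thus "x \<in> (\<lambda>i. (j+1+i) mod n) ` {i\<in>{..<k}. (j+1+i) mod n \<in> V1}"
      by (intro image_eqI[of _ _ "i - 1"]) auto
  next
    fix x assume "x \<in> (\<lambda>i. (j+1+i) mod n) ` {i\<in>{..<k}. (j+1+i) mod n \<in> V1}"
    then obtain i where "x = (j+1+i) mod n" "i < k" "x \<in> V1" by blast
    thus "x \<in> {(j+i) mod n | i::nat. 1\<le>i \<and> i\<le>k} \<inter> V1"
      by (auto intro!: exI[of _ "Suc i"])
  qed
  have inj: "inj_on (\<lambda>i. (j+1+i) mod n) {i\<in>{..<k}. (j+1+i) mod n \<in> V1}"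
  proof (rule inj_onI)
    fix a b assume a: "a \<in> {i\<in>{..<k}. (j+1+i) mod n \<in> V1}" and b: "b \<in> {i\<in>{..<k}. (j+1+i) mod n \<in> V1}"
      and eq: "(j+1+a) mod n = (j+1+b) mod n"
    have "a mod n = b mod n" using eq by (simp add: add.assoc nat_mod_eq_iff)
    thus "a = b" using a b assms by simp
  qed
  have "card ({(j+i) mod n | i::nat. 1\<le>i \<and> i\<le>k} \<inter> V1) = card {i\<in>{..<k}. (j+1+i) mod n \<in> V1}"
    unfolding e using card_image[OF inj] by simp
  also have "\<dots> = (\<Sum>i<k. (if (j+1+i) mod n \<in> V1 then 1 else 0::nat))"
    by (simp add: sum.If_cases Int_def)
  finally show ?thesis .
qed

lemma sum_split_lt: "(\<Sum>i<a+p. f i) = (\<Sum>i<a. f i) + (\<Sum>i<p. f (a+i::nat)) "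
  by (induction p) (simp_all add: add.assoc)

lemma block_sum:
  assumes "\<And>x. F (x+p) = (F x :: nat)"
  shows "(\<Sum>i<q*p. F (j+i)) = q * (\<Sum>i<p. F (j+i))"
proof (induction q)
  case (Suc q)
  have per: "F (j + q*p + i) = F (j+i)" for i
  proof (induction q)
    case (Suc q) thus ?case using assms[of "j + q*p + i"] by (simp add: algebra_simps)
  qed simp
  have "(\<Sum>i<Suc q*p. F (j+i)) = (\<Sum>i<q*p. F (j+i)) + (\<Sum>i<p. F (j+(q*p+i)))"
    using sum_split_lt[where a="q*p" and p=p and f="\<lambda>i. F (j+i)"] by (simp add: add.commute)
  thus ?case using Suc per by (simp add: add.assoc)
qed simp

lemma shift_sum:
  fixes y :: nat
  assumes "\<And>x. F (x+p) = (F x :: nat)"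
  shows "(\<Sum>i<p. F (y+i)) = (\<Sum>i<p. F i)"
proof (induction y)
  case (Suc y)
  have "(\<Sum>i<Suc p. F (y+i)) = F y + (\<Sum>i<p. F (Suc y+i))"
    by (subst sum.lessThan_Suc_shift) simp
  moreover have "(\<Sum>i<Suc p. F (y+i)) = (\<Sum>i<p. F (y+i)) + F (y+p)" by simp
  ultimately show ?case using Suc assms[of y] by simp
qed simp
lemma regular_part:
  fixes k n :: nat
  assumes "1 \<le> k" "k < n"
  defines "ed \<equiv> \<lambda>j. {(j+i) mod n | i::nat. 1\<le>i \<and> i\<le>k}"
  defines "E \<equiv> ed ` {..<n}"
  shows "\<forall>u\<in>{0..<n}. \<forall>v\<in>{0..<n}. hdegree E u = hdegree E v"
proof -
  define rot where "rot = (\<lambda>x. Suc x mod n)"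
  have n0: "n > 0" using assms by simp
  have edmod: "ed j = ed (j mod n)" for j
    unfolding ed_def by (metis mod_add_left_eq)
  have edE: "ed j \<in> E" for j
    unfolding E_def using edmod[of j] n0 by auto
  have edsub: "ed j \<subseteq> {..<n}" for j
    unfolding ed_def using n0 by auto
  have rot_ed: "rot ` ed j = ed (Suc j)" for j
    unfolding ed_def rot_def
    by (auto simp: image_def mod_Suc_eq)
  have injrot: "inj_on rot {..<n}"
    unfolding rot_def by (rule inj_onI) (auto simp: mod_Suc split: if_splits)
  have key: "hdegree E (rot v) = hdegree E v" if v: "v < n" for v
  proof -
    have eq: "{e\<in>E. rot v \<in> e} = image rot ` {e\<in>E. v \<in> e}"
    proof (intro equalityI subsetI)
      fix e assume "e \<in> {e\<in>E. rot v \<in> e}"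
      then obtain j where j: "e = ed j" "rot v \<in> ed j" unfolding E_def by auto
      have ej: "ed j = rot ` ed (j + n - 1)" using rot_ed[of "j+n-1"] n0 edmod[of j] edmod[of "Suc (j+n-1)"]
        by (simp add: Suc_diff_le)
      obtain w where w: "w \<in> ed (j+n-1)" "rot v = rot w" using j ej by auto
      have "w < n" using w edsub by blast
      hence "v = w" using w injrot v by (auto dest: inj_onD)
      hence "v \<in> ed (j+n-1)" using w by simp
      thus "e \<in> image rot ` {e\<in>E. v \<in> e}" using j ej edE by blast
    next
      fix e assume "e \<in> image rot ` {e\<in>E. v \<in> e}"
      then obtain e' where "e = rot ` e'" "e' \<in> E" "v \<in> e'" by blast
      then obtain j where "e' = ed j" "e = ed (Suc j)" "v \<in> ed j" unfolding E_def using rot_ed by auto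
      hence "rot v \<in> rot ` ed j" by simp
      hence "rot v \<in> e" using rot_ed[of j] \<open>e = ed (Suc j)\<close> by simp
      thus "e \<in> {e\<in>E. rot v \<in> e}" using edE \<open>e = ed (Suc j)\<close> by simp
    qed
    have inj: "inj_on (image rot) {e\<in>E. v \<in> e}"
    proof (rule inj_onI)
      fix a b assume ab: "a \<in> {e\<in>E. v \<in> e}" "b \<in> {e\<in>E. v \<in> e}" and r: "rot ` a = rot ` b"
      have "a \<subseteq> {..<n}" "b \<subseteq> {..<n}" using ab edsub unfolding E_def by auto
      then show "a = b" using inj_on_image_eq_iff[OF injrot, of a b] r by simp
    qed
    show ?thesis unfolding hdegree_def eq using card_image[OF inj] by simp
  qed
  have "hdegree E v = hdegree E 0" if "v < n" for v
    using that
  proof (induction v)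
    case (Suc v)
    have "rot v = Suc v" unfolding rot_def using Suc.prems by simp
    hence "hdegree E (Suc v) = hdegree E v" using key[of v] Suc.prems by simp
    thus ?case using Suc by simp
  qed simp
  thus ?thesis by (metis atLeastLessThan_iff)
qed
lemma ob_part:
  fixes k n t0 l0 :: nat
  assumes k1: "1 \<le> k" and kn: "k < n" and kf: "k = 2^t0*(2*l0+1)" and ke: "even k"
  defines "ed \<equiv> \<lambda>j. {(j+i) mod n | i::nat. 1\<le>i \<and> i\<le>k}"
  defines "E \<equiv> ed ` {..<n}"
  shows "odd_bipartite {0..<n} E \<longleftrightarrow> 2^t0 dvd n"
proof
  have n0: "n > 0" using kn by simp
  assume "odd_bipartite {0..<n} E"
  moreover have "E \<noteq> {}" unfolding E_def using n0 by auto
  ultimately obtain V1 where V1: "\<forall>e\<in>E. odd (card (e \<inter> V1))" unfolding odd_bipartite_def by blast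
  define F where "F = (\<lambda>x. if x mod n \<in> V1 then 1 else (0::nat))"
  have Fn: "F (x + n) = F x" for x unfolding F_def by simp
  have W: "odd (\<Sum>i<k. F (y+i))" for y
  proof -
    define j where "j = (y + n - 1) mod n"
    have "ed j \<in> E" unfolding E_def j_def using n0 by simp
    hence "odd (card (ed j \<inter> V1))" using V1 by blast
    hence "odd (\<Sum>i<k. F (j+1+i))" using win_card[OF kn, of j V1] unfolding ed_def F_def by simp
    moreover have "F (j+1+i) = F (y+i)" for i
    proof -
      have "(j+1+i) mod n = (y + n - 1 + 1 + i) mod n" unfolding j_def by (metis mod_add_left_eq add.assoc)
      also have "\<dots> = (y+i+n) mod n" using n0 by (simp add: algebra_simps)
      also have "\<dots> = (y+i) mod n" by simp
      finally show ?thesis unfolding F_def by simp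
    qed
    ultimately show ?thesis by simp
  qed
  have F01: "F x = 0 \<or> F x = 1" for x unfolding F_def by simp
  have Fk: "F (x + k) = F x" for x
  proof -
    have a: "(\<Sum>i<Suc k. F (x+i)) = F x + (\<Sum>i<k. F (Suc x+i))"
      by (subst sum.lessThan_Suc_shift) simp
    have b: "(\<Sum>i<Suc k. F (x+i)) = (\<Sum>i<k. F (x+i)) + F (x+k)" by simp
    have "odd (\<Sum>i<k. F (x+i))" "odd (\<Sum>i<k. F (Suc x+i))" using W[of x] W[of "Suc x"] by auto
    thus ?thesis using a b F01[of x] F01[of "x+k"] by presburger
  qed
  have Fmk: "F (x + a*k) = F x" for x a
    by (induction a) (simp_all, metis Fk add.assoc add.commute)
  have Fmn: "F (x + a*n) = F x" for x a
    by (induction a) (simp_all, metis Fn add.assoc add.commute)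
  define g where "g = gcd k n"
  obtain a b where ab: "k * a = n * b + g" using bezout_nat[of k n] k1 unfolding g_def by auto
  have Fg: "F (x + g) = F x" for x
  proof -
    have "F (x + g) = F (x + g + b*n)" using Fmn[of "x+g" b] by simp
    also have "\<dots> = F (x + a*k)" using ab by (simp add: algebra_simps)
    also have "\<dots> = F x" by (rule Fmk)
    finally show ?thesis .
  qed
  have kg: "k = (k div g) * g" unfolding g_def by simp
  have "(\<Sum>i<k. F (0+i)) = (k div g) * (\<Sum>i<g. F (0+i))"
    using block_sum[where F=F and p=g and q="k div g" and j=0, OF Fg] kg[symmetric] by argo
  hence "odd (k div g)" using W[of 0] by simp
  hence cop: "coprime (2^t0) (k div g)" by simp
  have "2^t0 dvd (k div g) * g" using kf kg by (metis dvd_triv_left)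
  hence "2^t0 dvd g" using cop by (simp add: coprime_dvd_mult_right_iff)
  thus "2^t0 dvd n" unfolding g_def using dvd_trans gcd_dvd2 by blast
next
  assume dn: "2^t0 dvd n"
  define d where "d = (2::nat)^t0"
  have n0: "n > 0" using kn by simp
  have t0: "t0 \<ge> 1" using ke kf by (cases t0) auto
  have d2: "d \<ge> 2" unfolding d_def using t0 by (metis one_le_numeral power_increasing power_one_right)
  define V1 where "V1 = {x\<in>{0..<n}. d dvd x}"
  define V2 where "V2 = {x\<in>{0..<n}. \<not> d dvd x}"
  define G where "G = (\<lambda>x. if d dvd x then 1 else (0::nat))"
  have Gd: "G (x + d) = G x" for x unfolding G_def by simp
  have Gsum: "(\<Sum>i<d. G i) = 1"
  proof -
    obtain d' where d': "d = Suc d'" using d2 by (cases d) auto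
    have "G (Suc i) = 0" if "i < d'" for i unfolding G_def using that d'
      by (auto dest: dvd_imp_le)
    hence "(\<Sum>i<d'. G (Suc i)) = 0" by simp
    thus ?thesis unfolding d' by (subst sum.lessThan_Suc_shift) (simp add: G_def)
  qed
  have "\<forall>e\<in>E. odd (card (e \<inter> V1))"
  proof
    fix e assume "e \<in> E"
    then obtain j where e: "e = ed j" unfolding E_def by auto
    have "card (e \<inter> V1) = (\<Sum>i<k. (if (j+1+i) mod n \<in> V1 then 1 else 0::nat))"
      unfolding e ed_def by (rule win_card[OF kn])
    also have "\<dots> = (\<Sum>i<k. G (j+1+i))"
    proof (rule sum.cong)
      fix i
      have "d dvd (j+1+i) mod n \<longleftrightarrow> d dvd (j+1+i)" using dn unfolding d_def
        by (simp add: dvd_mod_iff)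
      thus "(if (j+1+i) mod n \<in> V1 then 1 else 0::nat) = G (j+1+i)"
        unfolding V1_def G_def using n0 by simp
    qed simp
    also have "\<dots> = (2*l0+1) * (\<Sum>i<d. G (j+1+i))"
      using block_sum[where F=G and p=d and q="2*l0+1" and j="j+1", OF Gd] kf unfolding d_def by (simp add: mult.commute)
    also have "\<dots> = 2*l0+1" using shift_sum[where F=G and p=d and y="j+1", OF Gd] Gsum by simp
    finally show "odd (card (e \<inter> V1))" by simp
  qed
  moreover have "{0..<n} = V1 \<union> V2" "V1 \<inter> V2 = {}" unfolding V1_def V2_def by auto
  moreover have "0 \<in> V1" unfolding V1_def using n0 by simp
  moreover have "1 \<in> V2" unfolding V2_def using d2 kn k1 by (auto dest: dvd_imp_le)
  ultimately show "odd_bipartite {0..<n} E" unfolding odd_bipartite_def by blast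
qed

theorem corollary4p2:
  fixes k n t0 l0 :: nat
  assumes "n \<ge> k + 1"
  shows "hregular (s_cycle_vertices k (k - 1) n) (s_cycle_edges k (k - 1) n) \<and>
         (even k \<and> k = 2 ^ t0 * (2 * l0 + 1) \<longrightarrow>
           (odd_bipartite (s_cycle_vertices k (k - 1) n) (s_cycle_edges k (k - 1) n)
             \<longleftrightarrow> 2 ^ t0 dvd n))"
proof (cases "k = 0")
  case True
  have "s_cycle_vertices k (k - 1) n = {}" unfolding s_cycle_vertices_def True by simp
  hence "hregular (s_cycle_vertices k (k - 1) n) (s_cycle_edges k (k - 1) n)"
    unfolding hregular_def by simp
  moreover have "k \<noteq> 2 ^ t0 * (2 * l0 + 1)" using True by simp
  ultimately show ?thesis by simp
next
  case False
  hence k1: "1 \<le> k" by simp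
  have kn: "k < n" using assms by simp
  have V: "s_cycle_vertices k (k - 1) n = {0..<n}" unfolding s_cycle_vertices_def using k1 by simp
  have E: "s_cycle_edges k (k - 1) n = (\<lambda>j. {(j+i) mod n | i::nat. 1\<le>i \<and> i\<le>k}) ` {..<n}"
    unfolding s_cycle_edges_def using k1 by auto
  show ?thesis unfolding V E hregular_def
    using regular_part[OF k1 kn] ob_part[OF k1 kn] by blast
qed

end
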